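(* Let $X,Y,\hat X,\hat Y$ be Banach spaces and let $T\colon X\to Y$ and $\hat T\colon\hat X\to\hat Y$ be bounded linear operators such that $(X,Y,T)\equiv(\hat X,\hat Y,\hat T)$. Then $T$ is surjective if and only if $\hat T$ is surjective.
   Context: A Banach space $X$ is regarded as a many-sorted metric structure with one sort $B_X(r)$ for each nonnegative rational $r$ (the closed ball of radius $r$ about $0$), together with: the inclusion maps $B_X(r)\to B_X(s)$ for $r<s$; vector addition $B_X(r)\times B_X(s)\to B_X(r+s)$; for each $\lambda\in\mathbb{Q}$, multiplication by $\lambda$ as a map $B_X(r)\to B_X(|\lambda|r)$; the normalized norm predicate $\|x\|/r$ on $B_X(r)$; and the metric $d(x,y)=\|x-y\|/(2r)$ on $B_X(r)$. For a bounded operator $T\colon X\to Y$, the structure $(X,Y,T)$ consists of the structures of $X$ and $Y$ on disjoint sorts together with $T$ as the family of maps $B_X(r)\to B_Y(s)$ for $s\ge\|T\|r$. Finitary formulas are built from atomic formulas using the connectives $1-x$, $x/2$, $\min(x+y,1)$ (equivalently $\max(x-y,0)$) and the quantifiers $\inf_x,\sup_x$ over the sorts, with values in $[0,1]$. $M\equiv N$ means $\phi^M=\phi^N$ for every finitary sentence $\phi$ (in the common signature). *)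

theory Defs
  imports "HOL-Analysis.Analysis"
begin

text \<open>Sides: the sorts B_X(r) and B_Y(r), r a nonnegative rational.\<close>
datatype side = SX | SY

text \<open>Each constructor carries the sort indices it is typed with.
  V n sd r      : variable number n of sort B_sd(r)
  Inc sd r s t  : inclusion B_sd(r) -> B_sd(s), r < s
  Add sd r s t u: addition B_sd(r) x B_sd(s) -> B_sd(r+s)
  Scal sd l r t : multiplication by l, B_sd(r) -> B_sd(|l| r)
  App r s t     : the operator symbol B_X(r) -> B_Y(s)\<close>
datatype tm =
    V nat side rat
  | Inc side rat rat tm
  | Add side rat rat tm tm
  | Scal side rat rat tm
  | App rat rat tm

text \<open>Formulas: atomic norm / metric predicates, connectives 1-x, x/2,
  min(x+y,1), and quantifiers over sorts.\<close>
datatype fm =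
    FNorm side rat tm
  | FDist side rat tm tm
  | FNeg fm
  | FHalf fm
  | FPlus fm fm
  | FInf nat side rat fm
  | FSup nat side rat fm

text \<open>Sort of a term; the argument \<open>c\<close> says which operator symbols
  T_{r,s} : B_X(r) -> B_Y(s) belong to the signature.\<close>
fun sort_of :: "(rat \<Rightarrow> rat \<Rightarrow> bool) \<Rightarrow> tm \<Rightarrow> (side \<times> rat) option" where
  "sort_of c (V n sd r) = (if 0 \<le> r then Some (sd, r) else None)"
| "sort_of c (Inc sd r s t) =
     (if sort_of c t = Some (sd, r) \<and> r < s then Some (sd, s) else None)"
| "sort_of c (Add sd r s t u) =
     (if sort_of c t = Some (sd, r) \<and> sort_of c u = Some (sd, s) then Some (sd, r + s) else None)"
| "sort_of c (Scal sd l r t) =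
     (if sort_of c t = Some (sd, r) then Some (sd, \<bar>l\<bar> * r) else None)"
| "sort_of c (App r s t) =
     (if sort_of c t = Some (SX, r) \<and> c r s then Some (SY, s) else None)"

fun wf_fm :: "(rat \<Rightarrow> rat \<Rightarrow> bool) \<Rightarrow> fm \<Rightarrow> bool" where
  "wf_fm c (FNorm sd r t) = (sort_of c t = Some (sd, r))"
| "wf_fm c (FDist sd r t u) = (sort_of c t = Some (sd, r) \<and> sort_of c u = Some (sd, r))"
| "wf_fm c (FNeg \<phi>) = wf_fm c \<phi>"
| "wf_fm c (FHalf \<phi>) = wf_fm c \<phi>"
| "wf_fm c (FPlus \<phi> \<psi>) = (wf_fm c \<phi> \<and> wf_fm c \<psi>)"
| "wf_fm c (FInf n sd r \<phi>) = (0 \<le> r \<and> wf_fm c \<phi>)"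
| "wf_fm c (FSup n sd r \<phi>) = (0 \<le> r \<and> wf_fm c \<phi>)"

fun fv_tm :: "tm \<Rightarrow> (nat \<times> side \<times> rat) set" where
  "fv_tm (V n sd r) = {(n, sd, r)}"
| "fv_tm (Inc sd r s t) = fv_tm t"
| "fv_tm (Add sd r s t u) = fv_tm t \<union> fv_tm u"
| "fv_tm (Scal sd l r t) = fv_tm t"
| "fv_tm (App r s t) = fv_tm t"

fun fv_fm :: "fm \<Rightarrow> (nat \<times> side \<times> rat) set" where
  "fv_fm (FNorm sd r t) = fv_tm t"
| "fv_fm (FDist sd r t u) = fv_tm t \<union> fv_tm u"
| "fv_fm (FNeg \<phi>) = fv_fm \<phi>"
| "fv_fm (FHalf \<phi>) = fv_fm \<phi>"
| "fv_fm (FPlus \<phi> \<psi>) = fv_fm \<phi> \<union> fv_fm \<psi>"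
| "fv_fm (FInf n sd r \<phi>) = fv_fm \<phi> - {(n, sd, r)}"
| "fv_fm (FSup n sd r \<phi>) = fv_fm \<phi> - {(n, sd, r)}"

text \<open>Values of terms live in X + Y. Assignments: \<open>ax n r\<close> is the value of
  the variable (n, SX, r), \<open>ay n r\<close> that of (n, SY, r).\<close>
fun tm_eval :: "('x::real_normed_vector \<Rightarrow> 'y::real_normed_vector) \<Rightarrow>
    (nat \<Rightarrow> rat \<Rightarrow> 'x) \<Rightarrow> (nat \<Rightarrow> rat \<Rightarrow> 'y) \<Rightarrow> tm \<Rightarrow> 'x + 'y" where
  "tm_eval T ax ay (V n SX r) = Inl (ax n r)"
| "tm_eval T ax ay (V n SY r) = Inr (ay n r)"
| "tm_eval T ax ay (Inc sd r s t) = tm_eval T ax ay t"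
| "tm_eval T ax ay (Add sd r s t u) =
     (case (tm_eval T ax ay t, tm_eval T ax ay u) of
        (Inl a, Inl b) \<Rightarrow> Inl (a + b)
      | (Inr a, Inr b) \<Rightarrow> Inr (a + b)
      | (a, b) \<Rightarrow> a)"
| "tm_eval T ax ay (Scal sd l r t) =
     (case tm_eval T ax ay t of
        Inl a \<Rightarrow> Inl (real_of_rat l *\<^sub>R a)
      | Inr b \<Rightarrow> Inr (real_of_rat l *\<^sub>R b))"
| "tm_eval T ax ay (App r s t) =
     (case tm_eval T ax ay t of Inl a \<Rightarrow> Inr (T a) | Inr b \<Rightarrow> Inr b)"

fun snorm :: "('x::real_normed_vector) + ('y::real_normed_vector) \<Rightarrow> real" where
  "snorm (Inl a) = norm a"
| "snorm (Inr b) = norm b"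

fun sdiff :: "('x::real_normed_vector) + ('y::real_normed_vector) \<Rightarrow> 'x + 'y \<Rightarrow> real" where
  "sdiff (Inl a) (Inl b) = norm (a - b)"
| "sdiff (Inr a) (Inr b) = norm (a - b)"
| "sdiff _ _ = 0"

fun fm_val :: "('x::real_normed_vector \<Rightarrow> 'y::real_normed_vector) \<Rightarrow>
    (nat \<Rightarrow> rat \<Rightarrow> 'x) \<Rightarrow> (nat \<Rightarrow> rat \<Rightarrow> 'y) \<Rightarrow> fm \<Rightarrow> real" where
  "fm_val T ax ay (FNorm sd r t) = snorm (tm_eval T ax ay t) / real_of_rat r"
| "fm_val T ax ay (FDist sd r t u) =
     sdiff (tm_eval T ax ay t) (tm_eval T ax ay u) / (2 * real_of_rat r)"
| "fm_val T ax ay (FNeg \<phi>) = 1 - fm_val T ax ay \<phi>"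
| "fm_val T ax ay (FHalf \<phi>) = fm_val T ax ay \<phi> / 2"
| "fm_val T ax ay (FPlus \<phi> \<psi>) = min (fm_val T ax ay \<phi> + fm_val T ax ay \<psi>) 1"
| "fm_val T ax ay (FInf n SX r \<phi>) =
     (INF x\<in>{x. norm x \<le> real_of_rat r}. fm_val T (ax(n := (ax n)(r := x))) ay \<phi>)"
| "fm_val T ax ay (FInf n SY r \<phi>) =
     (INF y\<in>{y. norm y \<le> real_of_rat r}. fm_val T ax (ay(n := (ay n)(r := y))) \<phi>)"
| "fm_val T ax ay (FSup n SX r \<phi>) =
     (SUP x\<in>{x. norm x \<le> real_of_rat r}. fm_val T (ax(n := (ax n)(r := x))) ay \<phi>)"
| "fm_val T ax ay (FSup n SY r \<phi>) =
     (SUP y\<in>{y. norm y \<le> real_of_rat r}. fm_val T ax (ay(n := (ay n)(r := y))) \<phi>)"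

text \<open>Operator symbols T_{r,s} available for T: those with s \<ge> \<parallel>T\<parallel> r.\<close>
definition op_sig :: "('x::real_normed_vector \<Rightarrow> 'y::real_normed_vector) \<Rightarrow> rat \<Rightarrow> rat \<Rightarrow> bool" where
  "op_sig T r s \<longleftrightarrow> onorm T * real_of_rat r \<le> real_of_rat s"

text \<open>Elementary equivalence: equal values of all finitary sentences of the
  common signature (sentences evaluated at an arbitrary fixed assignment,
  here the zero assignment, on which closed formulas do not depend).\<close>
definition op_elem_equiv ::
  "('x::real_normed_vector \<Rightarrow> 'y::real_normed_vector) \<Rightarrow>
   ('u::real_normed_vector \<Rightarrow> 'v::real_normed_vector) \<Rightarrow> bool" where
  "op_elem_equiv T T' \<longleftrightarrow>
     (\<forall>\<phi>. wf_fm (\<lambda>r s. op_sig T r s \<and> op_sig T' r s) \<phi> \<and> fv_fm \<phi> = {} \<longrightarrow>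
        fm_val T (\<lambda>_ _. 0) (\<lambda>_ _. 0) \<phi> = fm_val T' (\<lambda>_ _. 0) (\<lambda>_ _. 0) \<phi>)"

end

theory Submission
  imports Defs
begin


lemma surj_from_approx:
  fixes T :: "'x::banach \<Rightarrow> 'y::real_normed_vector"
  assumes bl: "bounded_linear T" and c: "c > 0"
    and P: "\<And>y \<epsilon>. norm y \<le> 1 \<Longrightarrow> \<epsilon> > 0 \<Longrightarrow> \<exists>x. norm x \<le> c \<and> norm (T x - y) < \<epsilon>"
  shows "surj T"
proof -
  interpret bounded_linear T by fact
  have step: "\<exists>x. norm x \<le> c * norm y \<and> norm (T x - y) \<le> norm y / 2" for y
  proof (cases "y = 0")
    case True
    then show ?thesis by (intro exI[of _ 0]) (simp add: zero)
  next
    case False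
    define u where "u = y /\<^sub>R norm y"
    have nu: "norm u = 1" using False by (simp add: u_def)
    obtain x' where x': "norm x' \<le> c" "norm (T x' - u) < 1/2"
      using P[of u "1/2"] nu by auto
    have yu: "y = norm y *\<^sub>R u" using False by (simp add: u_def)
    have "T (norm y *\<^sub>R x') - y = norm y *\<^sub>R (T x' - u)"
      by (subst yu) (simp add: scaleR scaleR_diff_right)
    then have "norm (T (norm y *\<^sub>R x') - y) = norm y * norm (T x' - u)" by simp
    also have "\<dots> \<le> norm y / 2" using x'(2) mult_left_mono[of "norm (T x' - u)" "1/2" "norm y"] by simp
    finally have a: "norm (T (norm y *\<^sub>R x') - y) \<le> norm y / 2" .
    have "norm (norm y *\<^sub>R x') = norm y * norm x'" by simp
    also have "\<dots> \<le> norm y * c" using x'(1) by (rule mult_left_mono) simp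
    finally have b: "norm (norm y *\<^sub>R x') \<le> c * norm y" by (simp only: mult.commute)
    show ?thesis using a b by blast
  qed
  then obtain g where g: "\<And>y. norm (g y) \<le> c * norm y" "\<And>y. norm (T (g y) - y) \<le> norm y / 2"
    by metis
  show ?thesis
  unfolding surj_def
  proof (intro allI)
    fix y
    define r where "r = rec_nat y (\<lambda>_ r. r - T (g r))"
    have r0: "r 0 = y" and rS: "\<And>n. r (Suc n) = r n - T (g (r n))" by (simp_all add: r_def)
    have rb: "norm (r n) \<le> norm y * (1/2)^n" for n
    proof (induction n)
      case 0 then show ?case by (simp add: r0)
    next
      case (Suc n)
      have "norm (r (Suc n)) = norm (T (g (r n)) - r n)" by (simp add: rS norm_minus_commute)
      also have "\<dots> \<le> norm (r n) / 2" by (rule g(2))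
      also have "\<dots> \<le> norm y * (1/2)^n / 2" using Suc by simp
      finally show ?case by simp
    qed
    define x where "x n = g (r n)" for n
    have xb: "norm (x n) \<le> c * norm y * (1/2)^n" for n
    proof -
      have "norm (x n) \<le> c * norm (r n)" unfolding x_def by (rule g(1))
      also have "\<dots> \<le> c * (norm y * (1/2)^n)" using rb[of n] c by (intro mult_left_mono) auto
      finally show ?thesis by (simp only: mult.assoc)
    qed
    have sn: "summable (\<lambda>n. norm (x n))"
    proof (rule summable_comparison_test)
      show "summable (\<lambda>n. c * norm y * (1/2::real)^n)"
        by (rule summable_mult) (rule summable_geometric; simp)
      show "\<exists>N. \<forall>n\<ge>N. norm (norm (x n)) \<le> c * norm y * (1/2)^n"
        using xb by simp
    qed
    then have sx: "summable x" by (rule summable_norm_cancel)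
    have r0lim: "r \<longlonglongrightarrow> 0"
    proof -
      have g0: "(\<lambda>n. norm y * (1/2::real)^n) \<longlonglongrightarrow> 0"
        by (intro tendsto_mult_right_zero LIMSEQ_realpow_zero) simp_all
      show ?thesis
      proof (rule Lim_null_comparison[where g="\<lambda>n. norm y * (1/2)^n"])
        show "(\<lambda>n. norm y * (1/2::real)^n) \<longlonglongrightarrow> 0" by (rule g0)
        show "\<forall>\<^sub>F n in sequentially. norm (r n) \<le> norm y * (1/2)^n"
          by (rule always_eventually) (use rb in blast)
      qed
    qed
    have Tx: "T (x n) = r n - r (Suc n)" for n by (simp add: x_def rS)
    have "(\<lambda>n. T (x n)) sums (r 0 - 0)"
      unfolding Tx by (rule telescope_sums'[OF r0lim])
    moreover have "(\<lambda>n. T (x n)) sums T (suminf x)"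
      using sums[OF summable_sums[OF sx]] .
    ultimately have "T (suminf x) = y" using r0 sums_unique2 by fastforce
    then show "\<exists>z. y = T z" by metis
  qed
qed


lemma open_map_approx:
  fixes T :: "'x::banach \<Rightarrow> 'y::banach"
  assumes bl: "bounded_linear T" and su: "surj T"
  shows "\<exists>c>0. \<forall>y \<epsilon>. norm y \<le> 1 \<longrightarrow> \<epsilon> > 0 \<longrightarrow> (\<exists>x. norm x \<le> c \<and> norm (T x - y) < \<epsilon>)"
proof -
  interpret bounded_linear T by fact
  define C where "C n = closure (T ` cball 0 (real n))" for n :: nat
  have "\<exists>n. interior (C n) \<noteq> {}"
  proof (rule ccontr)
    assume H: "\<not> (\<exists>n. interior (C n) \<noteq> {})"
    have "euclidean interior_of \<Union>(range C) = {}"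
    proof (rule Baire_category_alt)
      show "completely_metrizable_space (euclidean :: 'y topology) \<or>
            locally_compact_space (euclidean :: 'y topology) \<and> regular_space (euclidean :: 'y topology)"
        using completely_metrizable_space_euclidean by blast
      show "countable (range C)" by simp
      fix S assume "S \<in> range C"
      then show "closedin euclidean S \<and> euclidean interior_of S = {}"
        using H by (auto simp: C_def)
    qed
    moreover have "\<Union>(range C) = UNIV"
    proof -
      have "y \<in> \<Union>(range C)" for y
      proof -
        obtain x where "y = T x" using su by (metis surjD)
        obtain n :: nat where "norm x \<le> real n" using real_arch_simple by blast
        then have "y \<in> C n" unfolding C_def using \<open>y = T x\<close>
          by (intro subsetD[OF closure_subset]) auto
        then show ?thesis by blast
      qed
      then show ?thesis by blast
    qed
    ultimately show False by simp
  qed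
  then obtain n y0 where "y0 \<in> interior (C n)" by blast
  then obtain e where e: "e > 0" "ball y0 e \<subseteq> C n" by (auto simp: mem_interior)
  have app: "\<exists>x. norm x \<le> 2 * real n \<and> norm (T x - z) < \<epsilon>" if z: "norm z < e" and ep: "\<epsilon> > 0" for z \<epsilon>
  proof -
    have "y0 + z \<in> C n" using e z by (auto simp: dist_norm)
    then obtain u1 where u1: "u1 \<in> T ` cball 0 (real n)" "dist u1 (y0 + z) < \<epsilon>/2"
      using ep unfolding C_def closure_approachable by (meson half_gt_zero)
    have "y0 \<in> C n" using e by auto
    then obtain u2 where u2: "u2 \<in> T ` cball 0 (real n)" "dist u2 y0 < \<epsilon>/2"
      using ep unfolding C_def closure_approachable by (meson half_gt_zero)
    obtain x1 where x1: "norm x1 \<le> real n" "u1 = T x1" using u1(1) by auto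
    obtain x2 where x2: "norm x2 \<le> real n" "u2 = T x2" using u2(1) by auto
    have "T (x1 - x2) - z = (T x1 - (y0 + z)) - (T x2 - y0)" by (simp add: diff)
    then have "norm (T (x1 - x2) - z) \<le> norm (T x1 - (y0 + z)) + norm (T x2 - y0)"
      by (metis norm_triangle_ineq4)
    also have "\<dots> < \<epsilon>" using u1(2) u2(2) x1(2) x2(2) by (simp add: dist_norm)
    finally have a: "norm (T (x1 - x2) - z) < \<epsilon>" .
    have "norm (x1 - x2) \<le> norm x1 + norm x2" by (rule norm_triangle_ineq4)
    then have "norm (x1 - x2) \<le> 2 * real n" using x1(1) x2(1) by simp
    with a show ?thesis by blast
  qed
  define c where "c = 4 * (real n + 1) / e"
  have "c > 0" using e by (simp add: c_def)
  moreover have "\<exists>x. norm x \<le> c \<and> norm (T x - y) < \<epsilon>" if y: "norm y \<le> 1" and ep: "\<epsilon> > 0" for y \<epsilon>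
  proof -
    have "norm ((e/2) *\<^sub>R y) < e" using y e by (simp add: mult_le_one)
    moreover have "\<epsilon> * e / 2 > 0" using ep e by simp
    ultimately obtain x' where x': "norm x' \<le> 2 * real n" "norm (T x' - (e/2) *\<^sub>R y) < \<epsilon> * e / 2"
      using app by blast
    have eq: "T ((2/e) *\<^sub>R x') - y = (2/e) *\<^sub>R (T x' - (e/2) *\<^sub>R y)"
      using e by (simp add: scaleR scaleR_diff_right)
    have "norm (T ((2/e) *\<^sub>R x') - y) = (2/e) * norm (T x' - (e/2) *\<^sub>R y)"
      using e by (simp add: eq)
    also have "\<dots> < (2/e) * (\<epsilon> * e / 2)" using x'(2) e by (intro mult_strict_left_mono) auto
    also have "\<dots> = \<epsilon>" using e by simp
    finally have a: "norm (T ((2/e) *\<^sub>R x') - y) < \<epsilon>" .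
    have "norm ((2/e) *\<^sub>R x') = (2/e) * norm x'" using e by simp
    also have "\<dots> \<le> (2/e) * (2 * real n)" using x'(1) e by (intro mult_left_mono) auto
    also have "\<dots> \<le> c" using e by (simp add: c_def divide_simps)
    finally show ?thesis using a by blast
  qed
  ultimately show ?thesis by blast
qed

definition Pap :: "('x::real_normed_vector \<Rightarrow> 'y::real_normed_vector) \<Rightarrow> real \<Rightarrow> bool" where
  "Pap T c \<longleftrightarrow> (\<forall>y \<epsilon>. norm y \<le> 1 \<longrightarrow> \<epsilon> > 0 \<longrightarrow> (\<exists>x. norm x \<le> c \<and> norm (T x - y) < \<epsilon>))"

definition Vq :: "('x::real_normed_vector \<Rightarrow> 'y::real_normed_vector) \<Rightarrow> rat \<Rightarrow> rat \<Rightarrow> real" where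
  "Vq T q s = (SUP y\<in>{y::'y. norm y \<le> 1}. INF x\<in>{x::'x. norm x \<le> real_of_rat q}.
       norm (T x - y) / (2 * real_of_rat s))"

lemma Vq_eq:
  fixes T :: "'x::real_normed_vector \<Rightarrow> 'y::real_normed_vector"
    and T' :: "'u::real_normed_vector \<Rightarrow> 'v::real_normed_vector"
  assumes E: "op_elem_equiv T T'" and q: "0 \<le> q" and s: "1 < s"
    and o1: "op_sig T q s" and o2: "op_sig T' q s"
  shows "Vq T q s = Vq T' q s"
proof -
  define \<phi> where "\<phi> = FSup 1 SY 1 (FInf 0 SX q
     (FDist SY s (App q s (V 0 SX q)) (Inc SY 1 s (V 1 SY 1))))"
  have wf: "wf_fm (\<lambda>r s. op_sig T r s \<and> op_sig T' r s) \<phi>"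
    using q s o1 o2 by (simp add: \<phi>_def)
  have fv: "fv_fm \<phi> = {}" by (auto simp: \<phi>_def)
  have "fm_val T (\<lambda>_ _. 0) (\<lambda>_ _. 0) \<phi> = fm_val T' (\<lambda>_ _. 0) (\<lambda>_ _. 0) \<phi>"
    using E wf fv unfolding op_elem_equiv_def by blast
  moreover have "fm_val T (\<lambda>_ _. 0) (\<lambda>_ _. 0) \<phi> = Vq T q s"
    by (simp add: \<phi>_def Vq_def)
  moreover have "fm_val T' (\<lambda>_ _. 0) (\<lambda>_ _. 0) \<phi> = Vq T' q s"
    by (simp add: \<phi>_def Vq_def)
  ultimately show ?thesis by simp
qed

lemma Vq_zero_iff:
  fixes T :: "'x::real_normed_vector \<Rightarrow> 'y::real_normed_vector"
  assumes bl: "bounded_linear T" and q: "0 \<le> q" and s: "0 < s"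
  shows "Vq T q s = 0 \<longleftrightarrow> Pap T (real_of_rat q)"
proof -
  interpret bounded_linear T by fact
  define s' where "s' = real_of_rat s"
  have s': "s' > 0" using s by (simp add: s'_def)
  define Bq where "Bq = {x::'x. norm x \<le> real_of_rat q}"
  define B1 where "B1 = {y::'y. norm y \<le> 1}"
  define f where "f y x = norm (T x - y) / (2 * s')" for y x
  define I where "I y = (INF x\<in>Bq. f y x)" for y
  have V: "Vq T q s = (SUP y\<in>B1. I y)"
    by (simp add: Vq_def I_def f_def Bq_def B1_def s'_def)
  have Bq0: "0 \<in> Bq" using q by (simp add: Bq_def)
  have f0: "0 \<le> f y x" for y x using s' by (simp add: f_def)
  have bb: "bdd_below (f y ` Bq)" for y by (rule bdd_belowI[where m=0]) (use f0 in auto)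
  have I0: "0 \<le> I y" for y unfolding I_def using Bq0 f0 by (intro cINF_greatest) auto
  have Iup: "I y \<le> f y x" if "x \<in> Bq" for y x unfolding I_def using bb that by (rule cINF_lower)
  have bbI: "bdd_above (I ` B1)"
  proof (rule bdd_aboveI)
    fix t assume "t \<in> I ` B1"
    then obtain y where y: "y \<in> B1" "t = I y" by auto
    have "I y \<le> f y 0" using Iup Bq0 by blast
    also have "\<dots> = norm y / (2 * s')" by (simp add: f_def zero)
    also have "\<dots> \<le> 1 / (2 * s')" using y s' by (intro divide_right_mono) (auto simp: B1_def)
    finally show "t \<le> 1 / (2 * s')" using y by simp
  qed
  have B1ne: "B1 \<noteq> {}" by (auto simp: B1_def intro: exI[of _ 0])
  show ?thesis
  proof
    assume V0: "Vq T q s = 0"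
    show "Pap T (real_of_rat q)" unfolding Pap_def
    proof (intro allI impI)
      fix y :: 'y and \<epsilon> :: real assume y: "norm y \<le> 1" and ep: "\<epsilon> > 0"
      have "I y \<le> 0" using V0 V cSUP_upper[OF _ bbI, of y] y by (simp add: B1_def)
      then have "I y < \<epsilon> / (2 * s')" using ep s' by (smt (verit) divide_pos_pos)
      then obtain x where "x \<in> Bq" "f y x < \<epsilon> / (2 * s')"
        using cINF_less_iff[of Bq "f y" "\<epsilon> / (2 * s')"] Bq0 bb[of y] unfolding I_def by blast
      moreover have "f y x < \<epsilon> / (2 * s') \<Longrightarrow> norm (T x - y) < \<epsilon>"
        using s' by (simp add: f_def divide_simps)
      ultimately show "\<exists>x. norm x \<le> real_of_rat q \<and> norm (T x - y) < \<epsilon>"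
        by (auto simp: Bq_def)
    qed
  next
    assume P: "Pap T (real_of_rat q)"
    have "I y = 0" if y: "y \<in> B1" for y
    proof (rule ccontr)
      assume "I y \<noteq> 0"
      then have pos: "I y > 0" using I0[of y] by simp
      then obtain x where x: "norm x \<le> real_of_rat q" "norm (T x - y) < 2 * s' * I y"
      proof -
        have "2 * s' * I y > 0" using pos s' by simp
        moreover have "norm y \<le> 1" using y by (simp add: B1_def)
        ultimately show ?thesis using P that unfolding Pap_def by blast
      qed
      have "f y x < I y" using x(2) s' by (simp add: f_def divide_simps mult.commute)
      moreover have "I y \<le> f y x" using Iup x(1) by (simp add: Bq_def)
      ultimately show False by simp
    qed
    then have "(SUP y\<in>B1. I y) = (SUP y\<in>B1. (0::real))" by (intro SUP_cong) auto
    also have "\<dots> = 0" using B1ne by simp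
    finally show "Vq T q s = 0" using V by simp
  qed
qed

lemma transfer_surj:
  fixes T :: "'x::banach \<Rightarrow> 'y::banach" and T' :: "'u::banach \<Rightarrow> 'v::banach"
  assumes bl: "bounded_linear T" and bl': "bounded_linear T'"
    and E: "\<And>q s. 0 \<le> q \<Longrightarrow> 1 < s \<Longrightarrow> op_sig T q s \<Longrightarrow> op_sig T' q s \<Longrightarrow> Vq T q s = Vq T' q s"
    and su: "surj T"
  shows "surj T'"
proof -
  obtain c where c: "c > 0" "Pap T c"
    using open_map_approx[OF bl su] unfolding Pap_def by blast
  obtain n :: nat where n: "c \<le> real n" using real_arch_simple by blast
  define q :: rat where "q = of_nat n"
  have rq: "real_of_rat q = real n" by (simp add: q_def)
  have qpos: "real_of_rat q > 0" using c n rq by simp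
  have Pq: "Pap T (real_of_rat q)" unfolding Pap_def
  proof (intro allI impI)
    fix y :: 'y and \<epsilon> :: real assume "norm y \<le> 1" "\<epsilon> > 0"
    then obtain x where "norm x \<le> c" "norm (T x - y) < \<epsilon>" using c(2) unfolding Pap_def by blast
    then show "\<exists>x. norm x \<le> real_of_rat q \<and> norm (T x - y) < \<epsilon>"
      using n rq by (intro exI[of _ x]) simp
  qed
  obtain m :: nat where m: "1 + onorm T * real n + onorm T' * real n \<le> real m"
    using real_arch_simple by blast
  define s :: rat where "s = of_nat m + 1"
  have rs: "real_of_rat s = real m + 1" by (simp add: s_def of_rat_add)
  have on: "0 \<le> onorm T" "0 \<le> onorm T'" using bl bl' by (simp_all add: onorm_pos_le)
  have p1: "0 \<le> onorm T * real n" "0 \<le> onorm T' * real n" using on by simp_all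
  have "real_of_rat 1 < real_of_rat s" using rs m p1 by simp
  then have s1: "1 < s" by (simp only: of_rat_less)
  have o1: "op_sig T q s" unfolding op_sig_def rq rs using m on
    using p1 by linarith
  have o2: "op_sig T' q s" unfolding op_sig_def rq rs using m on
    using p1 by linarith
  have q0: "0 \<le> q" by (simp add: q_def)
  have s0: "0 < s" using s1 by simp
  have "Vq T q s = 0" using Vq_zero_iff[OF bl q0 s0] Pq by simp
  then have "Vq T' q s = 0" using E[OF q0 s1 o1 o2] by simp
  then have "Pap T' (real_of_rat q)" using Vq_zero_iff[OF bl' q0 s0] by simp
  then show ?thesis using surj_from_approx[OF bl' qpos] unfolding Pap_def by blast
qed

theorem proposition5p1:
  fixes T :: "'x::banach \<Rightarrow> 'y::banach" and T' :: "'u::banach \<Rightarrow> 'v::banach"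
  assumes "bounded_linear T" and "bounded_linear T'"
    and "op_elem_equiv T T'"
  shows "surj T \<longleftrightarrow> surj T'"
proof
  assume su: "surj T"
  show "surj T'"
  proof (rule transfer_surj[OF assms(1,2) _ su])
    fix q s assume "0 \<le> q" "1 < s" "op_sig T q s" "op_sig T' q s"
    then show "Vq T q s = Vq T' q s" using Vq_eq[OF assms(3)] by metis
  qed
next
  assume su: "surj T'"
  show "surj T"
  proof (rule transfer_surj[OF assms(2,1) _ su])
    fix q s assume "0 \<le> q" "1 < s" "op_sig T' q s" "op_sig T q s"
    then show "Vq T' q s = Vq T q s" using Vq_eq[OF assms(3)] by metis
  qed
qed

end
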